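(* Let $\mathbf{C}=\mathbf{C}_1\,\dot\cup\,\mathbf{C}_2$ and $\mathbf{B}=\mathbf{B}_+\,\dot\cup\,\mathbf{B}'\in\dot{\mathbb{P}}(\mathbb{L}(\mathbf{C}_1))$ with $|\mathbf{B}|=|\mathbf{C}_1|$. Suppose every $L\in\mathbf{B}_+$ has a positive monotonic effect on $D$ relative to $\mathbf{C}$, and $\mathbf{W}$ suffices to adjust for confounding of $\mathbf{C}$ on $D$. If for some tree $\mathfrak{T}$ on $\mathbf{B}_+$ and some values $\mathbf{c}_2,\mathbf{w}$ (all conditioning events having positive probability) $$E[D\mid\mathbf{B}=\mathbf{1},\mathbf{C}_2=\mathbf{c}_2,\mathbf{W}=\mathbf{w}]-\sum_{L\in\mathbf{B}}E[D\mid\mathbf{B}\setminus\{L\}=\mathbf{1},L=0,\mathbf{C}_2=\mathbf{c}_2,\mathbf{W}=\mathbf{w}]+\sum_{\mathbf{E}\in\mathfrak{T}}E[D\mid\mathbf{B}\setminus\mathbf{E}=\mathbf{1},\mathbf{E}=\mathbf{0},\mathbf{C}_2=\mathbf{c}_2,\mathbf{W}=\mathbf{w}]>0,$$ then $\mathbf{B}$ is irreducible for $\mathcal{D}(\mathbf{C},\Omega)$.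
   Context: $\Omega$ is a population with a probability distribution; events are binary random variables; $\overline{X}=1-X$; $\mathbb{L}(\mathbf{C})=\mathbf{C}\cup\{\overline{X}:X\in\mathbf{C}\}$; $\dot{\mathbb{P}}(\mathbb{L}(\mathbf{C}))$ is the set of subsets of $\mathbb{L}(\mathbf{C})$ not containing both $X$ and $\overline{X}$; $(L)_{\mathbf{c}}$ is the value of literal $L$ under assignment $\mathbf{c}$; $\bigwedge(\mathbf{B})=\min_{L\in\mathbf{B}}L$. Potential outcomes: $D_{\mathbf{c}}(\omega)\in\{0,1\}$; observed $\mathbf{C},D$ satisfy consistency $D(\omega)=D_{\mathbf{C}(\omega)}(\omega)$. Conditioning events like $\{\mathbf{B}\setminus\mathbf{E}=\mathbf{1},\mathbf{E}=\mathbf{0}\}$ mean literals in $\mathbf{E}$ equal 0 and other literals of $\mathbf{B}$ equal 1. $\mathbf{W}$ suffices to adjust for confounding of $\mathbf{C}$ on $D$ if $D_{\mathbf{c}}$ is independent of $\mathbf{C}$ given $\mathbf{W}=\mathbf{w}$ for all $\mathbf{c},\mathbf{w}$. A literal $L$ has a positive monotonic effect on $D$ relative to $\mathbf{C}$ if for all $\omega$ and all assignments $\mathbf{c},\mathbf{c}'$ differing only in the variable underlying $L$ with $(L)_{\mathbf{c}}=1,(L)_{\mathbf{c}'}=0$, $D_{\mathbf{c}}(\omega)\ge D_{\mathbf{c}'}(\omega)$. A tree on a finite set $\mathbf{S}$ is a set $\mathfrak{T}$ of 2-element subsets of $\mathbf{S}$ with $|\mathfrak{T}|=|\mathbf{S}|-1$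 connecting all elements (empty if $|\mathbf{S}|\le1$). A sufficient cause representation $(\mathbf{A},\mathfrak{B})$ for $\mathcal{D}(\mathbf{C},\Omega)$: binary $\mathbf{A}=\langle A_1,\dots,A_p\rangle$ unaffected by interventions on $\mathbf{C}$ and $\mathfrak{B}=\langle\mathbf{B}_1,\dots,\mathbf{B}_p\rangle\subseteq\dot{\mathbb{P}}(\mathbb{L}(\mathbf{C}))$ with $D_{\mathbf{c}}(\omega)=1$ iff some $j$ has $A_j(\omega)=1$ and $(\bigwedge(\mathbf{B}_j))_{\mathbf{c}}=1$. $\mathbf{B}$ is irreducible for $\mathcal{D}(\mathbf{C},\Omega)$ if every such representation has some $\mathbf{B}_i\supseteq\mathbf{B}$. *)

theory Defs
  imports "HOL-Probability.Probability"
begin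

(* Variables are indexed by a type 'i.  A literal is a pair (i, pol):
   (i, True) stands for the variable X_i, (i, False) for its complement 1 - X_i.
   Binary values 0/1 are represented by False/True. *)

type_synonym 'i literal = "'i \<times> bool"

definition lits :: "'i set \<Rightarrow> 'i literal set" where
  "lits C = C \<times> UNIV"

definition consistent_lits :: "'i set \<Rightarrow> 'i literal set \<Rightarrow> bool" where
  "consistent_lits C B \<longleftrightarrow> B \<subseteq> lits C \<and> \<not> (\<exists>i. (i, True) \<in> B \<and> (i, False) \<in> B)"

definition lit_val :: "'i literal \<Rightarrow> ('i \<Rightarrow> bool) \<Rightarrow> bool" where
  "lit_val L c = (if snd L then c (fst L) else \<not> c (fst L))"

definition conj_val :: "'i literal set \<Rightarrow> ('i \<Rightarrow> bool) \<Rightarrow> bool" where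
  "conj_val B c \<longleftrightarrow> (\<forall>L\<in>B. lit_val L c)"

definition assignment :: "'i set \<Rightarrow> ('i \<Rightarrow> bool) \<Rightarrow> bool" where
  "assignment C c \<longleftrightarrow> (\<forall>i. i \<notin> C \<longrightarrow> c i = False)"

definition obs :: "'i set \<Rightarrow> ('i \<Rightarrow> 'w \<Rightarrow> bool) \<Rightarrow> 'w \<Rightarrow> 'i \<Rightarrow> bool" where
  "obs C X \<omega> = (\<lambda>i. if i \<in> C then X i \<omega> else False)"

definition cond_prob :: "'w measure \<Rightarrow> 'w set \<Rightarrow> 'w set \<Rightarrow> real" where
  "cond_prob M A S = measure M (A \<inter> S) / measure M S"

definition cond_exp_bin :: "'w measure \<Rightarrow> ('w \<Rightarrow> bool) \<Rightarrow> 'w set \<Rightarrow> real" where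
  "cond_exp_bin M D S = (\<integral>\<omega>. indicator S \<omega> * (if D \<omega> then 1 else 0) \<partial>M) / measure M S"

(* W suffices to adjust for confounding of C on D:
   D_c is independent of (the random vector) C given W = w, for all c, w *)
definition adjusts :: "'w measure \<Rightarrow> 'i set \<Rightarrow> ('i \<Rightarrow> 'w \<Rightarrow> bool) \<Rightarrow> (('i \<Rightarrow> bool) \<Rightarrow> 'w \<Rightarrow> bool)
    \<Rightarrow> ('w \<Rightarrow> 'v) \<Rightarrow> bool" where
  "adjusts M C X Dpo W \<longleftrightarrow>
     (\<forall>c w. assignment C c \<longrightarrow> measure M {\<omega> \<in> space M. W \<omega> = w} > 0 \<longrightarrow>
       (\<forall>e c'. assignment C c' \<longrightarrow>
          cond_prob M ({\<omega> \<in> space M. Dpo c \<omega> = e} \<inter> {\<omega> \<in> space M. obs C X \<omega> = c'})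
                      {\<omega> \<in> space M. W \<omega> = w}
          = cond_prob M {\<omega> \<in> space M. Dpo c \<omega> = e} {\<omega> \<in> space M. W \<omega> = w}
            * cond_prob M {\<omega> \<in> space M. obs C X \<omega> = c'} {\<omega> \<in> space M. W \<omega> = w}))"

definition pos_monotonic :: "'w set \<Rightarrow> 'i set \<Rightarrow> (('i \<Rightarrow> bool) \<Rightarrow> 'w \<Rightarrow> bool) \<Rightarrow> 'i literal \<Rightarrow> bool" where
  "pos_monotonic \<Omega> C Dpo L \<longleftrightarrow>
     (\<forall>\<omega>\<in>\<Omega>. \<forall>c c'. assignment C c \<longrightarrow> assignment C c' \<longrightarrow>
        (\<forall>i. i \<noteq> fst L \<longrightarrow> c i = c' i) \<longrightarrow> lit_val L c \<longrightarrow> \<not> lit_val L c' \<longrightarrow>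
        (Dpo c' \<omega> \<longrightarrow> Dpo c \<omega>))"

definition is_tree :: "'a set \<Rightarrow> 'a set set \<Rightarrow> bool" where
  "is_tree S T \<longleftrightarrow>
     (\<forall>E\<in>T. E \<subseteq> S \<and> card E = 2) \<and> card T = card S - 1 \<and>
     (\<forall>x\<in>S. \<forall>y\<in>S. (x, y) \<in> {(u, v). {u, v} \<in> T}\<^sup>*)"

definition suff_cause_rep :: "'w set \<Rightarrow> 'i set \<Rightarrow> (('i \<Rightarrow> bool) \<Rightarrow> 'w \<Rightarrow> bool)
    \<Rightarrow> (('w \<Rightarrow> bool) \<times> 'i literal set) list \<Rightarrow> bool" where
  "suff_cause_rep \<Omega> C Dpo R \<longleftrightarrow>
     (\<forall>(A, B)\<in>set R. consistent_lits C B) \<and>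
     (\<forall>\<omega>\<in>\<Omega>. \<forall>c. assignment C c \<longrightarrow>
        (Dpo c \<omega> \<longleftrightarrow> (\<exists>(A, B)\<in>set R. A \<omega> \<and> conj_val B c)))"

definition irreducible :: "'w set \<Rightarrow> 'i set \<Rightarrow> (('i \<Rightarrow> bool) \<Rightarrow> 'w \<Rightarrow> bool) \<Rightarrow> 'i literal set \<Rightarrow> bool" where
  "irreducible \<Omega> C Dpo B \<longleftrightarrow>
     (\<forall>R. suff_cause_rep \<Omega> C Dpo R \<longrightarrow> (\<exists>(A, Bi)\<in>set R. B \<subseteq> Bi))"

definition cond_event :: "'w measure \<Rightarrow> ('i \<Rightarrow> 'w \<Rightarrow> bool) \<Rightarrow> 'i literal set \<Rightarrow> 'i literal set
    \<Rightarrow> 'i set \<Rightarrow> ('i \<Rightarrow> bool) \<Rightarrow> ('w \<Rightarrow> 'v) \<Rightarrow> 'v \<Rightarrow> 'w set" where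
  "cond_event M X B E C2 c2 W w =
     {\<omega> \<in> space M. (\<forall>L\<in>B. lit_val L (\<lambda>i. X i \<omega>) \<longleftrightarrow> L \<notin> E) \<and>
                  (\<forall>i\<in>C2. X i \<omega> = c2 i) \<and> W \<omega> = w}"

end

theory Submission
  imports Defs
begin

definition grel :: "'a set set \<Rightarrow> ('a \<times> 'a) set" where
  "grel F = {(u, v). {u, v} \<in> F}\<^sup>*"

definition ncomp :: "'a set \<Rightarrow> 'a set set \<Rightarrow> nat" where
  "ncomp V F = card ((\<lambda>x. grel F `` {x}) ` V)"

lemma grel_sym: "(u, v) \<in> grel F \<Longrightarrow> (v, u) \<in> grel F"
  unfolding grel_def
proof (induction rule: rtrancl_induct)
  case base then show ?case by simp
next
  case (step y z)
  have "(z, y) \<in> {(u, v). {u, v} \<in> F}" using step(2) by (simp add: insert_commute)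
  then show ?case using step(3) by (meson converse_rtrancl_into_rtrancl)
qed

lemma grel_trans: "(u, v) \<in> grel F \<Longrightarrow> (v, x) \<in> grel F \<Longrightarrow> (u, x) \<in> grel F"
  unfolding grel_def by (meson rtrancl_trans)

lemma grel_refl: "(u, u) \<in> grel F"
  unfolding grel_def by simp

lemma grel_class_eq: "(u, v) \<in> grel F \<Longrightarrow> grel F `` {u} = grel F `` {v}"
proof -
  assume uv: "(u, v) \<in> grel F"
  then have vu: "(v, u) \<in> grel F" by (rule grel_sym)
  show ?thesis
  proof
    show "grel F `` {u} \<subseteq> grel F `` {v}"
    proof
      fix x assume "x \<in> grel F `` {u}"
      then have "(u, x) \<in> grel F" by simp
      then show "x \<in> grel F `` {v}" using grel_trans[OF vu] by simp
    qed
    show "grel F `` {v} \<subseteq> grel F `` {u}"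
    proof
      fix x assume "x \<in> grel F `` {v}"
      then have "(v, x) \<in> grel F" by simp
      then show "x \<in> grel F `` {u}" using grel_trans[OF uv] by simp
    qed
  qed
qed

lemma grel_mono: "F \<subseteq> G \<Longrightarrow> grel F \<subseteq> grel G"
  unfolding grel_def by (rule rtrancl_mono) blast

lemma grel_insert:
  assumes "(x, y) \<in> grel (insert {a, b} F)"
  shows "(x, y) \<in> grel F \<or>
    (x \<in> grel F `` {a} \<union> grel F `` {b} \<and> y \<in> grel F `` {a} \<union> grel F `` {b})"
  using assms unfolding grel_def[of "insert {a,b} F"]
proof (induction rule: rtrancl_induct)
  case base then show ?case by (simp add: grel_refl)
next
  case (step y z)
  let ?K = "grel F `` {a} \<union> grel F `` {b}"
  have K: "q \<in> ?K" if "p \<in> ?K" "(p, q) \<in> grel F" for p q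
  proof -
    from that(1) have "(a, p) \<in> grel F \<or> (b, p) \<in> grel F" by simp
    then have "(a, q) \<in> grel F \<or> (b, q) \<in> grel F"
      using grel_trans[OF _ that(2)] by metis
    then show ?thesis by simp
  qed
  show ?case
  proof (cases "{y, z} \<in> F")
    case True
    then have yz: "(y, z) \<in> grel F" unfolding grel_def by auto
    from step(3) show ?thesis
    proof
      assume "(x, y) \<in> grel F"
      then have "(x, z) \<in> grel F" using grel_trans[OF _ yz] by simp
      then show ?thesis by simp
    next
      assume h: "x \<in> ?K \<and> y \<in> ?K"
      then have "z \<in> ?K" using K[OF _ yz] by simp
      then show ?thesis using h by simp
    qed
  next
    case False
    then have "{y, z} = {a, b}" using step(2) by auto
    then have yzK: "y \<in> ?K" "z \<in> ?K" using grel_refl[of a F] grel_refl[of b F]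
      by (auto simp: doubleton_eq_iff)
    from step(3) have "x \<in> ?K"
    proof
      assume "(x, y) \<in> grel F"
      then have "(y, x) \<in> grel F" by (rule grel_sym)
      then show ?thesis using K[OF yzK(1)] by simp
    next
      assume "x \<in> ?K \<and> y \<in> ?K" then show ?thesis by simp
    qed
    then show ?thesis using yzK by simp
  qed
qed

lemma ncomp_insert:
  assumes "finite V"
  shows "ncomp V F \<le> ncomp V (insert {a, b} F) + 1"
proof -
  let ?F' = "insert {a, b} F"
  let ?Q = "(\<lambda>x. grel F `` {x}) ` V"
  let ?psi = "\<lambda>X. grel ?F' `` X"
  have sub: "grel F \<subseteq> grel ?F'" by (rule grel_mono) blast
  have psi: "?psi (grel F `` {x}) = grel ?F' `` {x}" for x
  proof
    show "?psi (grel F `` {x}) \<subseteq> grel ?F' `` {x}"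
    proof
      fix z assume "z \<in> ?psi (grel F `` {x})"
      then obtain y where "(x, y) \<in> grel F" "(y, z) \<in> grel ?F'" by auto
      then have "(x, y) \<in> grel ?F'" "(y, z) \<in> grel ?F'" using sub by auto
      then have "(x, z) \<in> grel ?F'" by (rule grel_trans)
      then show "z \<in> grel ?F' `` {x}" by simp
    qed
    show "grel ?F' `` {x} \<subseteq> ?psi (grel F `` {x})"
    proof
      fix z assume "z \<in> grel ?F' `` {x}"
      moreover have "x \<in> grel F `` {x}" using grel_refl[of x F] by simp
      ultimately show "z \<in> ?psi (grel F `` {x})" by auto
    qed
  qed
  have img: "(\<lambda>x. grel ?F' `` {x}) ` V = ?psi ` ?Q"
    using psi by (simp add: image_image)
  have inj: "inj_on ?psi (?Q - {grel F `` {b}})"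
  proof (rule inj_onI)
    fix X Y assume X: "X \<in> ?Q - {grel F `` {b}}" and Y: "Y \<in> ?Q - {grel F `` {b}}"
      and eq: "?psi X = ?psi Y"
    from X obtain x where x: "X = grel F `` {x}" "X \<noteq> grel F `` {b}" by auto
    from Y obtain y where y: "Y = grel F `` {y}" "Y \<noteq> grel F `` {b}" by auto
    have "?psi X = grel ?F' `` {x}" "?psi Y = grel ?F' `` {y}" using x y psi by auto
    moreover have "y \<in> grel ?F' `` {y}" using grel_refl[of y ?F'] by simp
    ultimately have "(x, y) \<in> grel ?F'" using eq by simp
    then have "(x, y) \<in> grel F \<or>
      (x \<in> grel F `` {a} \<union> grel F `` {b} \<and> y \<in> grel F `` {a} \<union> grel F `` {b})"
      by (rule grel_insert)
    then show "X = Y"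
    proof
      assume "(x, y) \<in> grel F" then show ?thesis using x y grel_class_eq by metis
    next
      assume h: "x \<in> grel F `` {a} \<union> grel F `` {b} \<and> y \<in> grel F `` {a} \<union> grel F `` {b}"
      have "(b, x) \<notin> grel F" using x grel_class_eq by metis
      then have xa: "(a, x) \<in> grel F" using h by simp
      have "(b, y) \<notin> grel F" using y grel_class_eq by metis
      then have ya: "(a, y) \<in> grel F" using h by simp
      show ?thesis using x(1) y(1) grel_class_eq[OF xa] grel_class_eq[OF ya] by simp
    qed
  qed
  have fQ: "finite ?Q" using assms by simp
  have "card ?Q \<le> card (?Q - {grel F `` {b}}) + 1"
  proof (cases "grel F `` {b} \<in> ?Q")
    case True
    have "card (?Q - {grel F `` {b}}) = card ?Q - 1" using fQ True by (simp add: card_Diff_singleton)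
    moreover have "card ?Q > 0" using fQ True card_gt_0_iff by blast
    ultimately show ?thesis by linarith
  next
    case False then show ?thesis by simp
  qed
  also have "card (?Q - {grel F `` {b}}) = card (?psi ` (?Q - {grel F `` {b}}))"
    using inj by (simp add: card_image)
  also have "\<dots> \<le> card (?psi ` ?Q)"
    using assms by (intro card_mono) auto
  finally show ?thesis unfolding ncomp_def img by simp
qed

lemma ncomp_union:
  assumes "finite V" "finite G" "\<forall>E\<in>G. card E = 2"
  shows "ncomp V F \<le> ncomp V (F \<union> G) + card G"
  using assms(2,3)
proof (induction G rule: finite_induct)
  case empty then show ?case by simp
next
  case (insert e G)
  obtain a b where e: "e = {a, b}" using insert(4) by (auto simp: card_2_iff)
  have "ncomp V F \<le> ncomp V (F \<union> G) + card G" using insert by simp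
  also have "ncomp V (F \<union> G) \<le> ncomp V (insert e (F \<union> G)) + 1"
    unfolding e by (rule ncomp_insert[OF assms(1)])
  finally show ?case using insert by simp
qed

lemma tree_sub_edges:
  assumes tree: "is_tree V T" and fin: "finite V" and S: "S \<subseteq> V" "S \<noteq> {}"
  shows "card {E\<in>T. E \<subseteq> S} + 1 \<le> card S"
proof -
  let ?TS = "{E\<in>T. E \<subseteq> S}"
  let ?G = "T - ?TS"
  have edges: "\<forall>E\<in>T. E \<subseteq> V \<and> card E = 2"
    using tree unfolding is_tree_def by (elim conjE)
  have cT: "card T = card V - 1"
    using tree unfolding is_tree_def by (elim conjE)
  have conn: "\<And>x y. x \<in> V \<Longrightarrow> y \<in> V \<Longrightarrow> (x, y) \<in> grel T"
  proof -
    fix x y assume xV: "x \<in> V" and yV: "y \<in> V"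
    have h: "\<forall>x\<in>V. \<forall>y\<in>V. (x, y) \<in> {(u, v). {u, v} \<in> T}\<^sup>*"
      using tree unfolding is_tree_def by (elim conjE)
    show "(x, y) \<in> grel T" unfolding grel_def using bspec[OF bspec[OF h xV] yV] .
  qed
  have finT: "finite T"
  proof -
    have "T \<subseteq> Pow V" using edges by auto
    then show ?thesis using fin by (meson finite_Pow_iff rev_finite_subset)
  qed
  obtain s where s: "s \<in> S" using S by blast
  then have sV: "s \<in> V" using S by blast
  have fin2: "\<forall>E\<in>?G. card E = 2" using edges by simp
  have A: "ncomp V ?TS \<le> ncomp V (?TS \<union> ?G) + card ?G"
    using fin finT fin2 by (intro ncomp_union) auto
  have B: "?TS \<union> ?G = T" by auto
  have C: "card ?G = card T - card ?TS" using finT by (intro card_Diff_subset) auto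
  have D: "ncomp V T = 1"
  proof -
    have h: "grel T `` {x} = grel T `` {s}" if "x \<in> V" for x
      by (rule grel_class_eq[OF conn[OF that sV]])
    have "(\<lambda>x. grel T `` {x}) ` V = (\<lambda>x. grel T `` {s}) ` V"
      by (rule image_cong[OF refl h])
    also have "\<dots> = {grel T `` {s}}" using sV by auto
    finally have "(\<lambda>x. grel T `` {x}) ` V = {grel T `` {s}}" .
    then show ?thesis unfolding ncomp_def by simp
  qed
  have E: "card (V - S) + 1 \<le> ncomp V ?TS"
  proof -
    have single: "grel ?TS `` {x} = {x}" if "x \<notin> S" for x
    proof -
      have "(x, y) \<in> grel ?TS \<Longrightarrow> y = x" for y
        unfolding grel_def
      proof (induction rule: rtrancl_induct)
        case base then show ?case by simp
      next
        case (step y z)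
        then have "{y, z} \<subseteq> S" by simp
        then have "y \<in> S" by simp
        then show ?case using step(3) that by simp
      qed
      then show ?thesis using grel_refl[of x ?TS] by auto
    qed
    have insS: "grel ?TS `` {s} \<subseteq> S"
    proof -
      have "(s, y) \<in> grel ?TS \<Longrightarrow> y \<in> S" for y
        unfolding grel_def
      proof (induction rule: rtrancl_induct)
        case base then show ?case using s by simp
      next
        case (step y z)
        then have "{y, z} \<subseteq> S" by simp
        then show ?case by simp
      qed
      then show ?thesis by auto
    qed
    have sub: "insert (grel ?TS `` {s}) ((\<lambda>x. {x}) ` (V - S)) \<subseteq> (\<lambda>x. grel ?TS `` {x}) ` V"
    proof
      fix X assume "X \<in> insert (grel ?TS `` {s}) ((\<lambda>x. {x}) ` (V - S))"
      then show "X \<in> (\<lambda>x. grel ?TS `` {x}) ` V"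
      proof
        assume "X = grel ?TS `` {s}" then show ?thesis using sV by simp
      next
        assume "X \<in> (\<lambda>x. {x}) ` (V - S)"
        then obtain x where "x \<in> V" "x \<notin> S" "X = {x}" by auto
        then show ?thesis using single[of x] by (intro image_eqI[where x=x]) simp_all
      qed
    qed
    have notin: "grel ?TS `` {s} \<notin> (\<lambda>x. {x}) ` (V - S)"
    proof
      assume "grel ?TS `` {s} \<in> (\<lambda>x. {x}) ` (V - S)"
      then obtain x where "x \<notin> S" "grel ?TS `` {s} = {x}" by auto
      then show False using insS by auto
    qed
    have "card (insert (grel ?TS `` {s}) ((\<lambda>x. {x}) ` (V - S))) = card (V - S) + 1"
    proof -
      have "inj_on (\<lambda>x. {x}) (V - S)" by (auto intro: inj_onI)
      then have "card ((\<lambda>x. {x}) ` (V - S)) = card (V - S)" by (rule card_image)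
      moreover have "finite ((\<lambda>x. {x}) ` (V - S))" using fin by simp
      ultimately show ?thesis using notin by simp
    qed
    moreover have "card (insert (grel ?TS `` {s}) ((\<lambda>x. {x}) ` (V - S))) \<le> ncomp V ?TS"
      unfolding ncomp_def using sub fin by (intro card_mono) auto
    ultimately show ?thesis by simp
  qed
  have F: "card ?TS \<le> card T" using finT by (intro card_mono) auto
  have G: "card (V - S) = card V - card S" using card_Diff_subset[OF finite_subset[OF S(1) fin] S(1)] .
  have H: "card S \<le> card V" using fin S by (intro card_mono) auto
  have I: "card S \<ge> 1" proof -
    have "finite S" using finite_subset[OF S(1) fin] .
    then have "card S > 0" using S(2) card_gt_0_iff by blast
    then show ?thesis by simp
  qed
  have A': "ncomp V ?TS \<le> 1 + (card T - card ?TS)" using A unfolding B C D .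
  from A' E F G H I cT show ?thesis by linarith
qed


definition cE :: "'i literal set \<Rightarrow> 'i set \<Rightarrow> ('i \<Rightarrow> bool) \<Rightarrow> 'i literal set \<Rightarrow> 'i \<Rightarrow> bool" where
  "cE B C2 c2 E i = (if i \<in> C2 then c2 i else if (i, True) \<in> B then (i, True) \<notin> E
     else (i, False) \<in> B \<and> (i, False) \<in> E)"

lemma lit_cE:
  assumes "consistent_lits C1 B" "C1 \<inter> C2 = {}" "L \<in> B"
  shows "lit_val L (cE B C2 c2 E) \<longleftrightarrow> L \<notin> E"
proof -
  obtain i p where L: "L = (i, p)" by (cases L)
  have iC1: "i \<in> C1" using assms(1,3) L unfolding consistent_lits_def lits_def by auto
  then have iC2: "i \<notin> C2" using assms(2) by auto
  show ?thesis
  proof (cases p)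
    case True then show ?thesis using L iC2 assms(3) by (simp add: lit_val_def cE_def)
  next
    case False
    then have "(i, True) \<notin> B" using assms(1,3) L unfolding consistent_lits_def by auto
    then show ?thesis using L iC2 assms(3) False by (simp add: lit_val_def cE_def)
  qed
qed

lemma assign_cE:
  assumes "consistent_lits C1 B" "C = C1 \<union> C2"
  shows "assignment C (cE B C2 c2 E)"
  unfolding assignment_def
proof (intro allI impI)
  fix i assume "i \<notin> C"
  then have "i \<notin> C1" "i \<notin> C2" using assms(2) by auto
  then have "(i, True) \<notin> B" "(i, False) \<notin> B" using assms(1) unfolding consistent_lits_def lits_def by auto
  then show "cE B C2 c2 E i = False" using \<open>i \<notin> C2\<close> by (simp add: cE_def)
qed

lemma cE_other: "i \<noteq> fst L \<Longrightarrow> cE B C2 c2 (insert L E) i = cE B C2 c2 E i"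
  by (cases L) (auto simp: cE_def)

lemma lit_val_cong: "f (fst L) = g (fst L) \<Longrightarrow> lit_val L f = lit_val L g"
  by (simp add: lit_val_def)

lemma lit_val_eq_iff: "(lit_val L f \<longleftrightarrow> lit_val L g) \<longleftrightarrow> f (fst L) = g (fst L)"
  by (cases "snd L") (auto simp: lit_val_def)

lemma event_eq:
  assumes cons: "consistent_lits C1 B" and disj: "C1 \<inter> C2 = {}" and CC: "C = C1 \<union> C2"
    and cov: "\<forall>i\<in>C1. \<exists>p. (i, p) \<in> B"
  shows "cond_event M X B E C2 c2 W w =
    {\<omega> \<in> space M. obs C X \<omega> = cE B C2 c2 E} \<inter> {\<omega> \<in> space M. W \<omega> = w}"
proof -
  let ?c = "cE B C2 c2 E"
  have BC1: "fst L \<in> C1" if "L \<in> B" for L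
    using cons that unfolding consistent_lits_def lits_def by auto
  have asg: "assignment C ?c" using assign_cE[OF cons CC] .
  have key: "((\<forall>L\<in>B. lit_val L (\<lambda>i. X i \<omega>) \<longleftrightarrow> L \<notin> E) \<and> (\<forall>i\<in>C2. X i \<omega> = c2 i))
      \<longleftrightarrow> obs C X \<omega> = ?c" for \<omega>
  proof
    assume h: "(\<forall>L\<in>B. lit_val L (\<lambda>i. X i \<omega>) \<longleftrightarrow> L \<notin> E) \<and> (\<forall>i\<in>C2. X i \<omega> = c2 i)"
    show "obs C X \<omega> = ?c"
    proof
      fix i
      show "obs C X \<omega> i = ?c i"
      proof (cases "i \<in> C")
        case False
        then show ?thesis using asg unfolding assignment_def obs_def by simp
      next
        case True
        show ?thesis
        proof (cases "i \<in> C2")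
          case True
          then show ?thesis using h \<open>i \<in> C\<close> by (simp add: obs_def cE_def)
        next
          case False
          then have "i \<in> C1" using \<open>i \<in> C\<close> CC by simp
          then obtain p where ip: "(i, p) \<in> B" using cov by blast
          have "lit_val (i, p) (\<lambda>i. X i \<omega>) \<longleftrightarrow> lit_val (i, p) ?c"
            using h ip lit_cE[OF cons disj ip] by simp
          then have "X i \<omega> = ?c i" using lit_val_eq_iff[of "(i,p)"] by simp
          then show ?thesis using \<open>i \<in> C\<close> by (simp add: obs_def)
        qed
      qed
    qed
  next
    assume h: "obs C X \<omega> = ?c"
    have val: "X i \<omega> = ?c i" if "i \<in> C" for i
      using fun_cong[OF h, of i] that by (simp add: obs_def)
    have "lit_val L (\<lambda>i. X i \<omega>) \<longleftrightarrow> L \<notin> E" if "L \<in> B" for L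
    proof -
      have "fst L \<in> C" using BC1[OF that] CC by simp
      then have "lit_val L (\<lambda>i. X i \<omega>) = lit_val L ?c" using val by (intro lit_val_cong) simp
      then show ?thesis using lit_cE[OF cons disj that] by simp
    qed
    moreover have "X i \<omega> = c2 i" if "i \<in> C2" for i
      using val[of i] that CC by (simp add: cE_def)
    ultimately show "(\<forall>L\<in>B. lit_val L (\<lambda>i. X i \<omega>) \<longleftrightarrow> L \<notin> E) \<and> (\<forall>i\<in>C2. X i \<omega> = c2 i)"
      by blast
  qed
  show ?thesis unfolding cond_event_def using key by blast
qed

lemma alg_aux:
  fixes a b s m :: real
  assumes "m > 0" "s > 0" "a / m = b / m * (s / m)"
  shows "a / s = b / m"
proof -
  have "a = b * s / m" using assms(1,3) by (simp add: field_simps)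
  then show ?thesis using assms(1,2) by (simp add: field_simps)
qed

lemma cond_exp_eq:
  assumes P: "prob_space M"
    and Wm: "{\<omega> \<in> space M. W \<omega> = w} \<in> sets M"
    and Dm: "{\<omega> \<in> space M. Dpo c \<omega>} \<in> sets M"
    and asg: "assignment C c"
    and consistency: "\<And>\<omega>. \<omega> \<in> space M \<Longrightarrow> D \<omega> = Dpo (obs C X \<omega>) \<omega>"
    and adj: "adjusts M C X Dpo W"
    and pos: "measure M ({\<omega> \<in> space M. obs C X \<omega> = c} \<inter> {\<omega> \<in> space M. W \<omega> = w}) > 0"
  shows "cond_exp_bin M D ({\<omega> \<in> space M. obs C X \<omega> = c} \<inter> {\<omega> \<in> space M. W \<omega> = w})
    = measure M ({\<omega> \<in> space M. Dpo c \<omega>} \<inter> {\<omega> \<in> space M. W \<omega> = w})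
      / measure M {\<omega> \<in> space M. W \<omega> = w}"
    and "measure M {\<omega> \<in> space M. W \<omega> = w} > 0"
proof -
  interpret prob_space M by (rule P)
  let ?O = "{\<omega> \<in> space M. obs C X \<omega> = c}"
  let ?W = "{\<omega> \<in> space M. W \<omega> = w}"
  let ?D = "{\<omega> \<in> space M. Dpo c \<omega>}"
  let ?S = "?O \<inter> ?W"
  have Sm: "?S \<in> sets M" using pos measure_notin_sets by fastforce
  have "measure M ?S \<le> measure M ?W" using Wm by (intro finite_measure_mono) auto
  then show mW: "measure M ?W > 0" using pos by linarith
  have "(\<integral>\<omega>. indicator ?S \<omega> * (if D \<omega> then 1 else 0) \<partial>M) = (\<integral>\<omega>. (indicator (?S \<inter> ?D) \<omega> :: real) \<partial>M)"
  proof (rule Bochner_Integration.integral_cong[OF refl])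
    fix \<omega> assume om: "\<omega> \<in> space M"
    show "indicator ?S \<omega> * (if D \<omega> then 1 else 0) = (indicator (?S \<inter> ?D) \<omega> :: real)"
    proof (cases "\<omega> \<in> ?S")
      case True
      then have "D \<omega> = Dpo c \<omega>" using consistency[OF om] by simp
      then show ?thesis using True om by (simp add: indicator_def)
    next
      case False
      then have "\<omega> \<notin> ?S \<inter> ?D" by blast
      then show ?thesis using False by simp
    qed
  qed
  also have "\<dots> = measure M (?S \<inter> ?D)"
    using Bochner_Integration.integral_indicator[of M "?S \<inter> ?D"] by (simp add: Int_absorb2 Int_assoc)
  finally have ce: "cond_exp_bin M D ?S = measure M (?S \<inter> ?D) / measure M ?S"
    unfolding cond_exp_bin_def by simp
  have "cond_prob M ({\<omega> \<in> space M. Dpo c \<omega> = True} \<inter> ?O) ?W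
      = cond_prob M {\<omega> \<in> space M. Dpo c \<omega> = True} ?W * cond_prob M ?O ?W"
    using adj asg mW unfolding adjusts_def by blast
  then have eq: "measure M (?D \<inter> ?O \<inter> ?W) / measure M ?W
      = measure M (?D \<inter> ?W) / measure M ?W * (measure M ?S / measure M ?W)"
    unfolding cond_prob_def by simp
  have "?S \<inter> ?D = ?D \<inter> ?O \<inter> ?W" by blast
  then have ce2: "cond_exp_bin M D ?S = measure M (?D \<inter> ?O \<inter> ?W) / measure M ?S"
    using ce by simp
  show "cond_exp_bin M D ?S = measure M (?D \<inter> ?W) / measure M ?W"
    unfolding ce2 by (rule alg_aux[OF mW pos eq])
qed

lemma core_count:
  assumes finB: "finite B" and BP: "Bplus \<subseteq> B" and tree: "is_tree Bplus T"
    and mono1: "\<And>L. L \<in> Bplus \<Longrightarrow> d {L} \<Longrightarrow> d {}"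
    and mono2: "\<And>E L1 L2. E \<in> T \<Longrightarrow> E = {L1, L2} \<Longrightarrow> d E \<Longrightarrow> d {L1}"
    and ex: "d {} \<Longrightarrow> \<exists>L\<in>B. d {L}"
  shows "of_bool (d {}) + card (T \<inter> {E. d E}) \<le> card (B \<inter> {L. d {L}})"
proof -
  let ?S = "{L \<in> Bplus. d {L}}"
  have finP: "finite Bplus" using finB BP finite_subset by blast
  have edges: "\<forall>E\<in>T. E \<subseteq> Bplus \<and> card E = 2" using tree unfolding is_tree_def by (elim conjE)
  have finT: "finite T"
  proof -
    have "T \<subseteq> Pow Bplus" using edges by auto
    then show ?thesis using finP by (meson finite_Pow_iff rev_finite_subset)
  qed
  have sub: "T \<inter> {E. d E} \<subseteq> {E \<in> T. E \<subseteq> ?S}"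
  proof
    fix E assume E: "E \<in> T \<inter> {E. d E}"
    then have "card E = 2" "E \<subseteq> Bplus" using edges by auto
    then obtain L1 L2 where L: "E = {L1, L2}" by (auto simp: card_2_iff)
    have "d {L1}" using mono2 E L by blast
    moreover have "d {L2}" using mono2[of E L2 L1] E L by (simp add: insert_commute)
    ultimately show "E \<in> {E \<in> T. E \<subseteq> ?S}" using E L \<open>E \<subseteq> Bplus\<close> by auto
  qed
  have c1: "card (T \<inter> {E. d E}) \<le> card {E \<in> T. E \<subseteq> ?S}"
    using finT sub by (intro card_mono) auto
  have c2: "card ?S \<le> card (B \<inter> {L. d {L}})"
    using finB BP by (intro card_mono) auto
  have empt: "{E \<in> T. E \<subseteq> {}} = {}" using edges by fastforce
  show ?thesis
  proof (cases "d {}")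
    case False
    then have e: "?S = {}" using mono1 by blast
    have h0: "{E \<in> T. E \<subseteq> ?S} = {}" unfolding e using empt .
    have "card {E \<in> T. E \<subseteq> ?S} = 0" unfolding h0 by (rule card.empty)
    then have "card (T \<inter> {E. d E}) = 0" using c1 by linarith
    then show ?thesis using False by simp
  next
    case True
    show ?thesis
    proof (cases "?S = {}")
      case True
      obtain L where "L \<in> B" "d {L}" using ex \<open>d {}\<close> by blast
      then have "card (B \<inter> {L. d {L}}) > 0" using finB by (auto simp: card_gt_0_iff)
      moreover have h0: "{E \<in> T. E \<subseteq> ?S} = {}" unfolding True using empt .
      moreover have "card {E \<in> T. E \<subseteq> ?S} = 0" unfolding h0 by (rule card.empty)
      ultimately show ?thesis using c1 \<open>d {}\<close> by simp
    next
      case False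
      have "card {E \<in> T. E \<subseteq> ?S} + 1 \<le> card ?S"
        using tree_sub_edges[OF tree finP _ False] by auto
      then show ?thesis using c1 c2 \<open>d {}\<close> by simp
    qed
  qed
qed


theorem mainTheorem8:
  fixes M :: "'w measure"
    and C C1 C2 :: "'i set"
    and X :: "'i \<Rightarrow> 'w \<Rightarrow> bool"
    and D :: "'w \<Rightarrow> bool"
    and Dpo :: "('i \<Rightarrow> bool) \<Rightarrow> 'w \<Rightarrow> bool"
    and W :: "'w \<Rightarrow> 'v"
    and B Bplus Bprime :: "'i literal set"
    and T :: "'i literal set set"
    and c2 :: "'i \<Rightarrow> bool"
    and w :: 'v
  assumes "prob_space M"
    and "finite C"
    and "C = C1 \<union> C2" and "C1 \<inter> C2 = {}"
    and "\<And>i. i \<in> C \<Longrightarrow> {\<omega> \<in> space M. X i \<omega>} \<in> sets M"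
    and "\<And>v. {\<omega> \<in> space M. W \<omega> = v} \<in> sets M"
    and "{\<omega> \<in> space M. D \<omega>} \<in> sets M"
    and "\<And>c. assignment C c \<Longrightarrow> {\<omega> \<in> space M. Dpo c \<omega>} \<in> sets M"
    and consistency: "\<And>\<omega>. \<omega> \<in> space M \<Longrightarrow> D \<omega> = Dpo (obs C X \<omega>) \<omega>"
    and "B = Bplus \<union> Bprime" and "Bplus \<inter> Bprime = {}"
    and "consistent_lits C1 B"
    and "card B = card C1"
    and "\<And>L. L \<in> Bplus \<Longrightarrow> pos_monotonic (space M) C Dpo L"
    and "adjusts M C X Dpo W"
    and "is_tree Bplus T"
    and "measure M (cond_event M X B {} C2 c2 W w) > 0"
    and "\<And>L. L \<in> B \<Longrightarrow> measure M (cond_event M X B {L} C2 c2 W w) > 0"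
    and "\<And>E. E \<in> T \<Longrightarrow> measure M (cond_event M X B E C2 c2 W w) > 0"
    and "cond_exp_bin M D (cond_event M X B {} C2 c2 W w)
         - (\<Sum>L\<in>B. cond_exp_bin M D (cond_event M X B {L} C2 c2 W w))
         + (\<Sum>E\<in>T. cond_exp_bin M D (cond_event M X B E C2 c2 W w)) > 0"
  shows "irreducible (space M) C Dpo B"
proof -
  interpret prob_space M by fact
  have CC: "C = C1 \<union> C2" and disj: "C1 \<inter> C2 = {}" and cons: "consistent_lits C1 B"
    using assms(3,4,12) by auto
  have finC1: "finite C1" using assms(2,3) by simp
  have BC: "B \<subseteq> C1 \<times> UNIV" using cons unfolding consistent_lits_def lits_def by simp
  have finB: "finite B"
  proof -
    have "finite (C1 \<times> (UNIV :: bool set))" using finC1 by simp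
    then show ?thesis using BC finite_subset by blast
  qed
  have inj: "inj_on fst B"
  proof (rule inj_onI)
    fix x y assume xy: "x \<in> B" "y \<in> B" "fst x = fst y"
    obtain i p where x: "x = (i, p)" by (cases x)
    obtain j q where y: "y = (j, q)" by (cases y)
    have "i = j" using xy x y by simp
    show "x = y"
    proof (rule ccontr)
      assume "x \<noteq> y"
      then have "p \<noteq> q" using x y \<open>i = j\<close> by simp
      then have "(i, True) \<in> B \<and> (i, False) \<in> B" using xy(1,2) x y \<open>i = j\<close>
        by (cases p) auto
      then show False using cons unfolding consistent_lits_def by blast
    qed
  qed
  have fstB: "fst ` B = C1"
  proof (rule card_subset_eq[OF finC1])
    show "fst ` B \<subseteq> C1" using BC by auto
    show "card (fst ` B) = card C1" using card_image[OF inj] assms(13) by simp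
  qed
  have cov: "\<forall>i\<in>C1. \<exists>p. (i, p) \<in> B"
  proof
    fix i assume "i \<in> C1"
    then obtain L where "L \<in> B" "fst L = i" using fstB by blast
    then show "\<exists>p. (i, p) \<in> B" by (cases L) auto
  qed
  have BP: "Bplus \<subseteq> B" using assms(10) by blast
  have tree: "is_tree Bplus T" by fact
  have edges: "\<forall>E\<in>T. E \<subseteq> Bplus \<and> card E = 2" using tree unfolding is_tree_def by (elim conjE)
  have finP: "finite Bplus" using finB BP finite_subset by blast
  have finT: "finite T"
  proof -
    have "T \<subseteq> Pow Bplus" using edges by auto
    then show ?thesis using finP by (meson finite_Pow_iff rev_finite_subset)
  qed
  define c where "c E = cE B C2 c2 E" for E
  define Wset where "Wset = {\<omega> \<in> space M. W \<omega> = w}"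
  define Ds where "Ds E = {\<omega> \<in> space M. Dpo (c E) \<omega>}" for E
  define m where "m E = measure M (Ds E \<inter> Wset)" for E
  have asg: "assignment C (c E)" for E unfolding c_def by (rule assign_cE[OF cons CC])
  have Dsm: "Ds E \<in> sets M" for E unfolding Ds_def using assms(8)[OF asg] .
  have Wm: "Wset \<in> sets M" unfolding Wset_def by (rule assms(6))
  have ev: "cond_event M X B E C2 c2 W w = {\<omega> \<in> space M. obs C X \<omega> = c E} \<inter> Wset" for E
    unfolding c_def Wset_def by (rule event_eq[OF cons disj CC cov])
  have ce: "cond_exp_bin M D (cond_event M X B E C2 c2 W w) = m E / measure M Wset"
    and ceW: "measure M Wset > 0"
    if "measure M (cond_event M X B E C2 c2 W w) > 0" for E
  proof -
    have pos: "measure M ({\<omega> \<in> space M. obs C X \<omega> = c E} \<inter> {\<omega> \<in> space M. W \<omega> = w}) > 0"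
      using that unfolding ev Wset_def .
    note r = cond_exp_eq[OF assms(1) assms(6) assms(8)[OF asg] asg assms(9) assms(15) pos]
    show "cond_exp_bin M D (cond_event M X B E C2 c2 W w) = m E / measure M Wset"
      unfolding ev m_def Ds_def Wset_def using r(1) .
    show "measure M Wset > 0" unfolding Wset_def using r(2) .
  qed
  have mW: "measure M Wset > 0" using ceW[OF assms(17)] .
  have s1: "(\<Sum>L\<in>B. cond_exp_bin M D (cond_event M X B {L} C2 c2 W w)) = (\<Sum>L\<in>B. m {L} / measure M Wset)"
    using ce[OF assms(18)] by (intro sum.cong) auto
  have s2: "(\<Sum>E\<in>T. cond_exp_bin M D (cond_event M X B E C2 c2 W w)) = (\<Sum>E\<in>T. m E / measure M Wset)"
    using ce[OF assms(19)] by (intro sum.cong) auto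
  have "m {} / measure M Wset - (\<Sum>L\<in>B. m {L} / measure M Wset) + (\<Sum>E\<in>T. m E / measure M Wset) > 0"
    using assms(20) unfolding s1 s2 ce[OF assms(17)] .
  then have "(m {} - (\<Sum>L\<in>B. m {L}) + (\<Sum>E\<in>T. m E)) / measure M Wset > 0"
    by (simp add: sum_divide_distrib diff_divide_distrib add_divide_distrib)
  then have posnum: "m {} - (\<Sum>L\<in>B. m {L}) + (\<Sum>E\<in>T. m E) > 0"
    using mW by (simp add: zero_less_divide_iff)
  show ?thesis
    unfolding irreducible_def
  proof (intro allI impI)
    fix R assume rep: "suff_cause_rep (space M) C Dpo R"
    show "\<exists>(A, Bi)\<in>set R. B \<subseteq> Bi"
    proof (rule ccontr)
      assume no: "\<not> (\<exists>(A, Bi)\<in>set R. B \<subseteq> Bi)"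
      have repD: "Dpo c' \<omega> \<longleftrightarrow> (\<exists>(A, Bi)\<in>set R. A \<omega> \<and> conj_val Bi c')"
        if "\<omega> \<in> space M" "assignment C c'" for \<omega> c'
        using rep that unfolding suff_cause_rep_def by blast
      let ?ind = "\<lambda>E \<omega>. indicator (Ds E \<inter> Wset) \<omega> :: real"
      have pw: "?ind {} \<omega> + (\<Sum>E\<in>T. ?ind E \<omega>) \<le> (\<Sum>L\<in>B. ?ind {L} \<omega>)"
        if om: "\<omega> \<in> space M" for \<omega>
      proof (cases "\<omega> \<in> Wset")
        case False
        then show ?thesis by simp
      next
        case True
        define d where "d E = Dpo (c E) \<omega>" for E
        have ind: "?ind E \<omega> = of_bool (d E)" for E
          using True om unfolding d_def Ds_def by simp
        have mono1: "d {}" if "L \<in> Bplus" "d {L}" for L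
        proof -
          have pm: "pos_monotonic (space M) C Dpo L" using assms(14) that(1) .
          have LB: "L \<in> B" using that(1) BP by blast
          have pmw: "\<forall>c c'. assignment C c \<longrightarrow> assignment C c' \<longrightarrow>
              (\<forall>i. i \<noteq> fst L \<longrightarrow> c i = c' i) \<longrightarrow> lit_val L c \<longrightarrow> \<not> lit_val L c' \<longrightarrow>
              (Dpo c' \<omega> \<longrightarrow> Dpo c \<omega>)"
            using bspec[OF pm[unfolded pos_monotonic_def] om] .
          have a3: "\<forall>i. i \<noteq> fst L \<longrightarrow> c {} i = c {L} i"
            unfolding c_def using cE_other[of _ L B C2 c2 "{}"] by simp
          have a4: "lit_val L (c {})" unfolding c_def using lit_cE[OF cons disj LB] by simp
          have a5: "\<not> lit_val L (c {L})" unfolding c_def using lit_cE[OF cons disj LB] by simp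
          have a6: "Dpo (c {L}) \<omega>" using that(2) unfolding d_def .
          have "Dpo (c {}) \<omega>"
            using pmw[rule_format, OF asg[of "{}"] asg[of "{L}"] a3[rule_format] a4 a5 a6] .
          then show ?thesis unfolding d_def .
        qed
        have mono2: "d {L1}" if "E \<in> T" "E = {L1, L2}" "d E" for E L1 L2
        proof (cases "L1 = L2")
          case True then show ?thesis using that by simp
        next
          case False
          have L2P: "L2 \<in> Bplus" using edges that(1,2) by auto
          have L2B: "L2 \<in> B" using L2P BP by blast
          have pm: "pos_monotonic (space M) C Dpo L2" using assms(14) L2P .
          have Eeq: "E = insert L2 {L1}" using that(2) by auto
          have pmw: "\<forall>c c'. assignment C c \<longrightarrow> assignment C c' \<longrightarrow>
              (\<forall>i. i \<noteq> fst L2 \<longrightarrow> c i = c' i) \<longrightarrow> lit_val L2 c \<longrightarrow> \<not> lit_val L2 c' \<longrightarrow>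
              (Dpo c' \<omega> \<longrightarrow> Dpo c \<omega>)"
            using bspec[OF pm[unfolded pos_monotonic_def] om] .
          have a3: "\<forall>i. i \<noteq> fst L2 \<longrightarrow> c {L1} i = c (insert L2 {L1}) i"
            unfolding c_def using cE_other[of _ L2 B C2 c2 "{L1}"] by simp
          have a4: "lit_val L2 (c {L1})" unfolding c_def using lit_cE[OF cons disj L2B] False by simp
          have a5: "\<not> lit_val L2 (c (insert L2 {L1}))" unfolding c_def using lit_cE[OF cons disj L2B] by simp
          have a6: "Dpo (c (insert L2 {L1})) \<omega>" using that(3) Eeq unfolding d_def by simp
          have "Dpo (c {L1}) \<omega>"
            using pmw[rule_format, OF asg[of "{L1}"] asg[of "insert L2 {L1}"] a3[rule_format] a4 a5 a6] .
          then show ?thesis unfolding d_def .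
        qed
        have ex: "\<exists>L\<in>B. d {L}" if "d {}"
        proof -
          have "Dpo (c {}) \<omega>" using that unfolding d_def .
          then have "\<exists>(A, Bi)\<in>set R. A \<omega> \<and> conj_val Bi (c {})"
            using repD[OF om asg[of "{}"]] by simp
          then obtain A Bj where ABj: "(A, Bj) \<in> set R" "A \<omega>" "conj_val Bj (c {})"
            by auto
          have "\<not> B \<subseteq> Bj" using no ABj(1) by blast
          then obtain L where LB: "L \<in> B" "L \<notin> Bj" by blast
          have Ltrue: "lit_val L (c {})" unfolding c_def using lit_cE[OF cons disj LB(1)] by simp
          have "conj_val Bj (c {L})"
            unfolding conj_val_def
          proof
            fix L' assume L': "L' \<in> Bj"
            have L'true: "lit_val L' (c {})" using ABj(3) L' unfolding conj_val_def by blast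
            show "lit_val L' (c {L})"
            proof (cases "fst L' = fst L")
              case True
              have "L' \<noteq> L" using L' LB(2) by blast
              then have "snd L' \<noteq> snd L" using True by (cases L', cases L) simp
              then have "lit_val L' (c {}) \<longleftrightarrow> \<not> lit_val L (c {})"
                using True by (cases "snd L") (auto simp: lit_val_def)
              then show ?thesis using Ltrue L'true by simp
            next
              case False
              have "c {L} (fst L') = c {} (fst L')"
                unfolding c_def using cE_other[of "fst L'" L B C2 c2 "{}"] False by simp
              then have "lit_val L' (c {L}) = lit_val L' (c {})" by (rule lit_val_cong)
              then show ?thesis using L'true by simp
            qed
          qed
          then have "\<exists>(A, Bi)\<in>set R. A \<omega> \<and> conj_val Bi (c {L})" using ABj(1,2) by blast
          then have "Dpo (c {L}) \<omega>" using repD[OF om asg[of "{L}"]] by simp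
          then show ?thesis using LB(1) unfolding d_def by blast
        qed
        have core: "of_bool (d {}) + card (T \<inter> {E. d E}) \<le> card (B \<inter> {L. d {L}})"
          by (rule core_count[OF finB BP tree mono1 mono2 ex])
        have "real (of_bool (d {}) + card (T \<inter> {E. d E})) \<le> real (card (B \<inter> {L. d {L}}))"
          using core by (simp only: of_nat_le_iff)
        then have "of_bool (d {}) + real (card (T \<inter> {E. d E})) \<le> real (card (B \<inter> {L. d {L}}))"
          by simp
        moreover have "(\<Sum>E\<in>T. ?ind E \<omega>) = real (card (T \<inter> {E. d E}))"
          using finT by (simp add: ind)
        moreover have "(\<Sum>L\<in>B. ?ind {L} \<omega>) = real (card (B \<inter> {L. d {L}}))"
          using finB by (simp add: ind)
        ultimately show ?thesis by (simp add: ind)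
      qed
      have intg: "integrable M (?ind E)" for E
        using Dsm Wm by (subst integrable_indicator_iff) (auto simp: less_top[symmetric])
      have intm: "integral\<^sup>L M (?ind E) = m E" for E
      proof -
        have "Ds E \<inter> Wset \<inter> space M = Ds E \<inter> Wset" unfolding Ds_def by blast
        then show ?thesis unfolding m_def using Bochner_Integration.integral_indicator[of M "Ds E \<inter> Wset"] by simp
      qed
      have "integral\<^sup>L M (\<lambda>\<omega>. ?ind {} \<omega> + (\<Sum>E\<in>T. ?ind E \<omega>)) \<le> integral\<^sup>L M (\<lambda>\<omega>. \<Sum>L\<in>B. ?ind {L} \<omega>)"
        using pw intg by (intro Bochner_Integration.integral_mono) auto
      moreover have "integral\<^sup>L M (\<lambda>\<omega>. ?ind {} \<omega> + (\<Sum>E\<in>T. ?ind E \<omega>)) = m {} + (\<Sum>E\<in>T. m E)"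
        using intg intm by (simp add: Bochner_Integration.integral_sum)
      moreover have "integral\<^sup>L M (\<lambda>\<omega>. \<Sum>L\<in>B. ?ind {L} \<omega>) = (\<Sum>L\<in>B. m {L})"
        using intg intm by (simp add: Bochner_Integration.integral_sum)
      ultimately show False using posnum by linarith
    qed
  qed
qed

end
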